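(* Let $d=1$. For $x\in\mathbb{R}$, $$\#\Phi(x)=\begin{cases}\aleph_0 & \text{if } x\in\mathbb{Q},\\ 2^{\aleph_0} & \text{if } x\in\mathrm{WA}\setminus\mathbb{Q},\\ 0 & \text{if } x\in\mathrm{Bad}.\end{cases}$$
   Context: For $t\in\mathbb{R}$, $\|t\|$ is the distance from $t$ to $\mathbb{Z}$. Write $\mathbb{N}=\{1,2,\dots\}$. $\mathrm{Bad}=\{x\in\mathbb{R}:\inf_{n\in\mathbb{N}}n\|nx\|>0\}$ and $\mathrm{WA}=\mathbb{R}\setminus\mathrm{Bad}$. $\mathcal{D}$ is the set of all non-increasing $\psi:\mathbb{N}\to\mathbb{R}_{\ge0}$ with $\sum_n\psi(n)=\infty$. $W(\psi)$ is the set of $(x,y)\in\mathbb{R}^2$ with $\|nx+y\|<\psi(n)$ for infinitely many $n\in\mathbb{N}$. $\Pi=\bigcap_{\psi\in\mathcal{D}}W(\psi)$ and $\Phi(x)=\{y\in\mathbb{R}:(x,y)\in\Pi\}$. *)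

theory Defs
  imports "HOL-Analysis.Analysis" "HOL-Library.Equipollence"
begin

definition dZ :: "real \<Rightarrow> real" where
  "dZ t = infdist t \<int>"

definition Bad :: "real set" where
  "Bad = {x. (INF n\<in>{1::nat..}. real n * dZ (real n * x)) > 0}"

definition WA :: "real set" where
  "WA = UNIV - Bad"

text \<open>Non-increasing nonnegative functions on N = {1,2,...} with divergent sum
  (the value at 0 is irrelevant and unconstrained).\<close>
definition DD :: "(nat \<Rightarrow> real) set" where
  "DD = {\<psi>. (\<forall>n\<ge>1. \<psi> n \<ge> 0) \<and> (\<forall>m n. 1 \<le> m \<longrightarrow> m \<le> n \<longrightarrow> \<psi> n \<le> \<psi> m)
          \<and> filterlim (\<lambda>N. \<Sum>n=1..N. \<psi> n) at_top sequentially}"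

definition W :: "(nat \<Rightarrow> real) \<Rightarrow> (real \<times> real) set" where
  "W \<psi> = {(x, y). infinite {n::nat. n \<ge> 1 \<and> dZ (real n * x + y) < \<psi> n}}"

definition PiSet :: "(real \<times> real) set" where
  "PiSet = (\<Inter>\<psi>\<in>DD. W \<psi>)"

definition Phi :: "real \<Rightarrow> real set" where
  "Phi x = {y. (x, y) \<in> PiSet}"

end

theory Submission
  imports Defs
begin


lemma dZ_eq: "dZ t = \<bar>t - of_int (round t)\<bar>"
proof (rule antisym)
  show "dZ t \<le> \<bar>t - of_int (round t)\<bar>"
    unfolding dZ_def using infdist_le[of "of_int (round t)" "\<int>" t] by (simp add: dist_real_def)
  have h: "\<bar>t - of_int (round t)\<bar> \<le> \<bar>t - of_int k\<bar>" for k :: int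
  proof (rule ccontr)
    assume "\<not> ?thesis"
    hence "\<bar>t - of_int k\<bar> < \<bar>t - of_int (round t)\<bar>" by simp
    moreover have "\<bar>of_int (round t) - t\<bar> \<le> 1/2" by (rule of_int_round_abs_le)
    ultimately have "\<bar>real_of_int k - of_int (round t)\<bar> < 1" by linarith
    hence "k = round t" by linarith
    thus False using \<open>\<bar>t - of_int k\<bar> < _\<close> by simp
  qed
  show "\<bar>t - of_int (round t)\<bar> \<le> dZ t"
    unfolding dZ_def infdist_def
    by (auto intro!: cINF_greatest simp: dist_real_def Ints_def h)
qed

lemma dZ_le: "k \<in> \<int> \<Longrightarrow> dZ t \<le> \<bar>t - k\<bar>"
  unfolding dZ_def using infdist_le[of k "\<int>" t] by (simp add: dist_real_def)

lemma dZ_nonneg: "dZ t \<ge> 0" by (simp add: dZ_eq)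

lemma dZ_abs: "dZ t \<le> \<bar>t\<bar>" using dZ_le[of 0 t] by simp

lemma dZ_shift: "dZ (t + of_int m) = dZ t"
proof (rule antisym)
  show "dZ (t + of_int m) \<le> dZ t"
    using dZ_le[of "of_int (round t + m)" "t + of_int m"] by (simp add: dZ_eq)
  show "dZ t \<le> dZ (t + of_int m)"
    using dZ_le[of "of_int (round (t + of_int m) - m)" t] by (simp add: dZ_eq algebra_simps)
qed

lemma dZ_shift': "k \<in> \<int> \<Longrightarrow> dZ (t + k) = dZ t"
  by (metis Ints_cases dZ_shift)

lemma dZ_minus: "dZ (- t) = dZ t"
proof (rule antisym)
  show "dZ (- t) \<le> dZ t" using dZ_le[of "- of_int (round t)" "-t"] by (simp add: dZ_eq)
  show "dZ t \<le> dZ (- t)" using dZ_le[of "- of_int (round (-t))" "t"] by (simp add: dZ_eq)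
qed

lemma dZ_triangle: "dZ (a - b) \<le> dZ a + dZ b"
proof -
  have "dZ (a - b) \<le> \<bar>a - b - (of_int (round a) - of_int (round b))\<bar>"
    by (rule dZ_le) simp
  also have "\<dots> \<le> dZ a + dZ b" by (simp add: dZ_eq)
  finally show ?thesis .
qed

lemma dZ_zero_iff: "dZ t = 0 \<longleftrightarrow> t \<in> \<int>"
proof
  assume "dZ t = 0" hence "t = of_int (round t)" by (simp add: dZ_eq)
  thus "t \<in> \<int>" by (metis Ints_of_int)
next
  assume "t \<in> \<int>" thus "dZ t = 0" using dZ_le[of t t] dZ_nonneg[of t] by simp
qed



lemma DD_intro:
  assumes "\<And>n. n \<ge> 1 \<Longrightarrow> \<psi> n \<ge> 0"
    and "\<And>m n. 1 \<le> m \<Longrightarrow> m \<le> n \<Longrightarrow> \<psi> n \<le> \<psi> m"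
    and "\<And>B. \<exists>N. B \<le> (\<Sum>n=1..N. \<psi> n)"
  shows "\<psi> \<in> DD"
proof -
  have "filterlim (\<lambda>N. \<Sum>n=1..N. \<psi> n) at_top sequentially"
  proof (subst filterlim_at_top, intro allI)
    fix Z
    obtain N where N: "Z \<le> (\<Sum>n=1..N. \<psi> n)" using assms(3) by blast
    show "eventually (\<lambda>M. Z \<le> (\<Sum>n=1..M. \<psi> n)) sequentially"
      unfolding eventually_sequentially
    proof (intro exI allI impI)
      fix M assume "N \<le> M"
      have "(\<Sum>n=1..N. \<psi> n) \<le> (\<Sum>n=1..M. \<psi> n)"
        by (rule sum_mono2) (use \<open>N \<le> M\<close> assms(1) in auto)
      thus "Z \<le> (\<Sum>n=1..M. \<psi> n)" using N by linarith
    qed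
  qed
  thus ?thesis unfolding DD_def using assms(1,2) by blast
qed

lemma DD_unbounded:
  assumes "\<psi> \<in> DD" shows "\<exists>N. B < (\<Sum>n=1..N. \<psi> n)"
proof -
  have "filterlim (\<lambda>N. \<Sum>n=1..N. \<psi> n) at_top sequentially" using assms by (simp add: DD_def)
  hence "eventually (\<lambda>N. B + 1 \<le> (\<Sum>n=1..N. \<psi> n)) sequentially"
    by (simp add: filterlim_at_top)
  then obtain N where "B + 1 \<le> (\<Sum>n=1..N. \<psi> n)" unfolding eventually_sequentially by blast
  thus ?thesis by (intro exI[of _ N]) linarith
qed

lemma DD_nonneg: "\<psi> \<in> DD \<Longrightarrow> n \<ge> 1 \<Longrightarrow> \<psi> n \<ge> 0" by (simp add: DD_def)
lemma DD_mono: "\<psi> \<in> DD \<Longrightarrow> 1 \<le> m \<Longrightarrow> m \<le> n \<Longrightarrow> \<psi> n \<le> \<psi> m" by (simp add: DD_def)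

lemma DD_pos:
  assumes "\<psi> \<in> DD" "n \<ge> 1" shows "\<psi> n > 0"
proof (rule ccontr)
  assume "\<not> \<psi> n > 0"
  with DD_nonneg[OF assms] have z: "\<psi> n = 0" by simp
  have zz: "\<psi> m = 0" if "m \<ge> n" for m
    using DD_mono[OF assms(1) assms(2) that] DD_nonneg[OF assms(1), of m] that assms(2) z by simp
  have "(\<Sum>k=1..N. \<psi> k) \<le> (\<Sum>k=1..n. \<psi> k)" for N
  proof (cases "N \<le> n")
    case True thus ?thesis by (intro sum_mono2) (auto intro: DD_nonneg[OF assms(1)])
  next
    case False
    obtain p where p: "N = n + p" using False by (metis le_add_diff_inverse nat_le_linear)
    have "(\<Sum>k=1..N. \<psi> k) = (\<Sum>k=1..n. \<psi> k) + (\<Sum>k=Suc n..N. \<psi> k)"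
      using sum.ub_add_nat[of 1 n \<psi> p] assms(2) p by simp
    also have "(\<Sum>k=Suc n..N. \<psi> k) = 0" by (intro sum.neutral) (auto intro: zz)
    finally show ?thesis by simp
  qed
  with DD_unbounded[OF assms(1), of "\<Sum>k=1..n. \<psi> k"] show False by (meson not_less)
qed

lemma const_DD: assumes "c > 0" shows "(\<lambda>n. c) \<in> DD"
proof (rule DD_intro)
  fix B :: real
  have "B \<le> real (nat \<lceil>B / c\<rceil>) * c" using \<open>c > 0\<close>
    using real_nat_ceiling_ge[of "B/c"] by (simp add: divide_le_eq)
  moreover have "(\<Sum>n=1..nat \<lceil>B / c\<rceil>. c) = real (nat \<lceil>B / c\<rceil>) * c" by simp
  ultimately show "\<exists>N::nat. B \<le> (\<Sum>n=1..N. c)" by metis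
qed (use assms in auto)



lemma Phi_iff: "y \<in> Phi x \<longleftrightarrow> (\<forall>\<psi>\<in>DD. infinite {n::nat. n \<ge> 1 \<and> dZ (real n * x + y) < \<psi> n})"
  by (simp add: Phi_def PiSet_def W_def)

lemma Bad_bound:
  assumes "x \<in> Bad"
  obtains c where "c > 0" "\<And>k. k \<ge> 1 \<Longrightarrow> c \<le> real k * dZ (real k * x)"
proof -
  let ?c = "INF n\<in>{1::nat..}. real n * dZ (real n * x)"
  have "?c > 0" using assms by (simp add: Bad_def)
  moreover have "?c \<le> real k * dZ (real k * x)" if "k \<ge> 1" for k
    by (rule cINF_lower) (use that in \<open>auto intro!: bdd_belowI[of _ 0] simp: dZ_nonneg\<close>)
  ultimately show ?thesis using that by blast
qed

lemma Bad_case: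
  assumes "x \<in> Bad" shows "Phi x = {}"
proof -
  obtain c where c0: "c > 0" and hc: "\<And>k. k \<ge> 1 \<Longrightarrow> c \<le> real k * dZ (real k * x)"
    using Bad_bound[OF assms] by blast
  { fix y
    define a where "a n = dZ (real n * x + y)" for n :: nat
    have a0: "a n \<ge> 0" for n by (simp add: a_def dZ_nonneg)
    have pair: "c \<le> real (m - n) * (a n + a m)" if "n < m" for n m
    proof -
      have "dZ (real (m - n) * x) = dZ ((real m * x + y) - (real n * x + y))"
        using that by (simp add: of_nat_diff algebra_simps)
      also have "\<dots> \<le> a m + a n" unfolding a_def by (rule dZ_triangle)
      finally have "real (m - n) * dZ (real (m - n) * x) \<le> real (m - n) * (a n + a m)"
        by (intro mult_left_mono) auto
      moreover have "c \<le> real (m - n) * dZ (real (m - n) * x)" using hc[of "m - n"] that by simp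
      ultimately show ?thesis by linarith
    qed
    obtain n0 where n01: "n0 \<ge> 1" and n0pos: "\<And>n. n \<ge> n0 \<Longrightarrow> a n > 0"
    proof (cases "\<exists>z. a z = 0")
      case True
      then obtain z where z: "a z = 0" by blast
      have "a n > 0" if "n \<ge> Suc z" for n
      proof (rule ccontr)
        assume "\<not> a n > 0" hence "a n = 0" using a0[of n] by simp
        with pair[of z n] that z c0 show False by simp
      qed
      thus ?thesis using that[of "Suc z"] by simp
    next
      case False thus ?thesis using that[of 1] a0 by (metis less_eq_real_def order.refl)
    qed
    have "\<exists>\<psi>\<in>DD. finite {n::nat. n \<ge> 1 \<and> a n < \<psi> n}"
    proof (cases "\<exists>\<epsilon>>0. \<forall>m\<ge>n0. \<epsilon> \<le> a m")
      case True
      then obtain \<epsilon> where e0: "\<epsilon> > 0" and e: "\<And>m. m \<ge> n0 \<Longrightarrow> \<epsilon> \<le> a m" by blast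
      have "{n::nat. n \<ge> 1 \<and> a n < \<epsilon>} \<subseteq> {..<n0}" using e by (auto simp: not_less[symmetric])
      hence "finite {n::nat. n \<ge> 1 \<and> a n < \<epsilon>}" by (rule finite_subset) simp
      with const_DD[OF e0] show ?thesis by (intro bexI[of _ "\<lambda>n. \<epsilon>"]) auto
    next
      case False
      hence small: "\<And>\<epsilon>. \<epsilon> > 0 \<Longrightarrow> \<exists>m\<ge>n0. a m < \<epsilon>" by (auto simp: not_le)
      define \<psi> where "\<psi> n = Min (a ` {n0..max n n0})" for n
      have psi_le: "\<psi> n \<le> a k" if "n0 \<le> k" "k \<le> max n n0" for n k
        unfolding \<psi>_def using that by (intro Min_le) auto
      have psi_ex: "\<exists>k. n0 \<le> k \<and> k \<le> max n n0 \<and> \<psi> n = a k" for n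
      proof -
        have "Min (a ` {n0..max n n0}) \<in> a ` {n0..max n n0}" by (intro Min_in) auto
        then obtain k where "k \<in> {n0..max n n0}" "Min (a ` {n0..max n n0}) = a k" by blast
        thus ?thesis unfolding \<psi>_def by auto
      qed
      have psi_pos: "\<psi> n > 0" for n using psi_ex[of n] n0pos by force
      have psi_mono: "\<psi> n \<le> \<psi> m" if "m \<le> n" for m n
        unfolding \<psi>_def using that by (intro Min_antimono) auto
      have step: "\<exists>m. c / 2 \<le> (\<Sum>k\<in>{n..<m}. \<psi> k) \<and> n \<le> m \<and> n0 \<le> m \<and> \<psi> m = a m"
        if "n0 \<le> n" "\<psi> n = a n" for n
      proof -
        have an: "a n > 0" using n0pos that by simp
        define P where "P m \<longleftrightarrow> n0 \<le> m \<and> a m < a n" for m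
        obtain m0 where "P m0" using small[OF an] unfolding P_def by blast
        define m where "m = (LEAST m. P m)"
        have Pm: "P m" unfolding m_def by (rule LeastI) fact
        have notP: "\<not> P j" if "j < m" for j using not_less_Least[of j P] that unfolding m_def by blast
        have nm: "n < m"
        proof (rule ccontr)
          assume "\<not> n < m"
          hence "\<psi> n \<le> a m" using Pm unfolding P_def by (intro psi_le) auto
          thus False using Pm that unfolding P_def by simp
        qed
        have const: "\<psi> k = a n" if "n \<le> k" "k < m" for k
        proof (rule antisym)
          show "\<psi> k \<le> a n" using that \<open>n0 \<le> n\<close> by (intro psi_le) auto
          obtain j where j: "n0 \<le> j" "j \<le> max k n0" "\<psi> k = a j" using psi_ex[of k] by blast
          have "\<not> P j" using j that \<open>n0 \<le> n\<close> by (intro notP) auto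
          thus "a n \<le> \<psi> k" using j unfolding P_def by simp
        qed
        have rec: "\<psi> m = a m"
        proof (rule antisym)
          show "\<psi> m \<le> a m" using Pm unfolding P_def by (intro psi_le) auto
          obtain j where j: "n0 \<le> j" "j \<le> max m n0" "\<psi> m = a j" using psi_ex[of m] by blast
          show "a m \<le> \<psi> m"
          proof (cases "j < m")
            case True
            hence "\<not> P j" by (rule notP)
            thus ?thesis using j Pm unfolding P_def by simp
          next
            case False thus ?thesis using j Pm unfolding P_def by simp
          qed
        qed
        have "(\<Sum>k\<in>{n..<m}. \<psi> k) = (\<Sum>k\<in>{n..<m}. a n)" by (intro sum.cong) (auto simp: const)
        also have "\<dots> = real (m - n) * a n" by simp
        finally have s: "(\<Sum>k\<in>{n..<m}. \<psi> k) = real (m - n) * a n" .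
        have "c \<le> real (m - n) * (a n + a m)" by (rule pair[OF nm])
        also have "\<dots> \<le> real (m - n) * (2 * a n)" using Pm unfolding P_def by (intro mult_left_mono) auto
        finally have "c / 2 \<le> (\<Sum>k\<in>{n..<m}. \<psi> k)" unfolding s by simp
        thus ?thesis using nm rec Pm unfolding P_def by (intro exI[of _ m]) simp
      qed
      have ind: "\<exists>N\<ge>n. real K * (c / 2) \<le> (\<Sum>k\<in>{n..<N}. \<psi> k)"
        if "n0 \<le> n" "\<psi> n = a n" for K n
        using that
      proof (induction K arbitrary: n)
        case 0 show ?case by (intro exI[of _ n]) simp
      next
        case (Suc K)
        obtain m where m: "c / 2 \<le> (\<Sum>k\<in>{n..<m}. \<psi> k)" "n \<le> m" "n0 \<le> m" "\<psi> m = a m"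
          using step[OF Suc.prems] by blast
        obtain N where N: "N \<ge> m" "real K * (c / 2) \<le> (\<Sum>k\<in>{m..<N}. \<psi> k)"
          using Suc.IH[OF m(3,4)] by blast
        have "(\<Sum>k\<in>{n..<N}. \<psi> k) = (\<Sum>k\<in>{n..<m}. \<psi> k) + (\<Sum>k\<in>{m..<N}. \<psi> k)"
          using m(2) N(1) by (simp add: sum.atLeastLessThan_concat)
        thus ?case using m(1) N m(2) by (intro exI[of _ N]) (auto simp: algebra_simps)
      qed
      have "\<psi> \<in> DD"
      proof (rule DD_intro)
        show "0 \<le> \<psi> n" for n using psi_pos[of n] by simp
        show "\<psi> n \<le> \<psi> m" if "m \<le> n" for m n using psi_mono[OF that] .
        fix B :: real
        obtain K :: nat where K: "B \<le> real K * (c / 2)"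
          using real_nat_ceiling_ge[of "B / (c/2)"] c0
          by (metis divide_le_eq half_gt_zero)
        have "\<psi> n0 = a n0" using psi_ex[of n0] by auto
        then obtain N where N: "N \<ge> n0" "real K * (c / 2) \<le> (\<Sum>k\<in>{n0..<N}. \<psi> k)"
          using ind[of n0] by blast
        have "(\<Sum>k\<in>{n0..<N}. \<psi> k) \<le> (\<Sum>k=1..N. \<psi> k)"
          using n01 by (intro sum_mono2) (auto intro: less_imp_le[OF psi_pos])
        thus "\<exists>N. B \<le> (\<Sum>n=1..N. \<psi> n)" using K N by (intro exI[of _ N]) linarith
      qed
      moreover have "{n::nat. n \<ge> 1 \<and> a n < \<psi> n} \<subseteq> {..<n0}"
        using psi_le by (force simp: not_less[symmetric])
      hence "finite {n::nat. n \<ge> 1 \<and> a n < \<psi> n}" by (rule finite_subset) simp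
      ultimately show ?thesis by blast
    qed
    hence "y \<notin> Phi x" unfolding Phi_iff a_def by blast
  }
  thus ?thesis by blast
qed



lemma Rat_case:
  assumes "x \<in> \<rat>" shows "Phi x \<approx> (UNIV :: nat set)"
proof -
  obtain a b where b0: "b > 0" and xab: "x = of_int a / of_int b" using Rats_cases'[OF assms] by blast
  define q where "q = nat b"
  have q0: "q > 0" using b0 by (simp add: q_def)
  have qx: "real q * x = of_int a" using b0 xab by (simp add: q_def)
  define T where "T = {y. \<exists>n::nat. real n * x + y \<in> \<int>}"
  have "Phi x = T"
  proof
    show "Phi x \<subseteq> T"
    proof
      fix y assume y: "y \<in> Phi x"
      show "y \<in> T"
      proof (rule ccontr)
        assume "y \<notin> T"
        hence nz: "real n * x + y \<notin> \<int>" for n unfolding T_def by blast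
        define \<delta> where "\<delta> = Min ((\<lambda>n. dZ (real n * x + y)) ` {..<q})"
        have "\<delta> \<in> (\<lambda>n. dZ (real n * x + y)) ` {..<q}" unfolding \<delta>_def using q0 by (intro Min_in) auto
        hence d0: "\<delta> > 0" using nz dZ_nonneg dZ_zero_iff by (auto simp: less_le)
        have ge: "\<delta> \<le> dZ (real n * x + y)" for n
        proof -
          have "real n = real (n mod q) + real (n div q) * real q"
            by (metis of_nat_add of_nat_mult mod_div_mult_eq)
          hence "real n * x + y = (real (n mod q) * x + y) + of_int (int (n div q) * a)"
            using qx by (simp add: algebra_simps)
          hence "dZ (real n * x + y) = dZ ((real (n mod q) * x + y) + of_int (int (n div q) * a))"
            by (simp only:)
          also have "\<dots> = dZ (real (n mod q) * x + y)" by (rule dZ_shift)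
          finally have "dZ (real n * x + y) = dZ (real (n mod q) * x + y)" .
          moreover have "\<delta> \<le> dZ (real (n mod q) * x + y)" unfolding \<delta>_def using q0 by (intro Min_le) auto
          ultimately show ?thesis by simp
        qed
        have "{n::nat. n \<ge> 1 \<and> dZ (real n * x + y) < \<delta>} = {}" using ge by (auto simp: not_less)
        moreover have "infinite {n::nat. n \<ge> 1 \<and> dZ (real n * x + y) < (\<lambda>n. \<delta>) n}"
          using bspec[OF y[unfolded Phi_iff] const_DD[OF d0]] by simp
        ultimately show False by (metis finite.emptyI)
      qed
    qed
    show "T \<subseteq> Phi x"
    proof
      fix y assume "y \<in> T"
      then obtain n where n: "real n * x + y \<in> \<int>" unfolding T_def by blast
      show "y \<in> Phi x" unfolding Phi_iff
      proof
        fix \<psi> assume psi: "\<psi> \<in> DD"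
        show "infinite {m::nat. m \<ge> 1 \<and> dZ (real m * x + y) < \<psi> m}"
          unfolding infinite_nat_iff_unbounded_le
        proof
          fix M
          define m where "m = n + q * (M + 1)"
          have "1 * (M + 1) \<le> q * (M + 1)" using q0 by (intro mult_le_mono1) simp
          hence "m \<ge> M" "m \<ge> 1" by (simp_all add: m_def)
          have "real m * x + y = (real n * x + y) + of_int (int (M + 1) * a)"
          proof -
            have "real m * x + y = (real n * x + y) + real (M + 1) * (real q * x)"
              unfolding m_def by (simp add: algebra_simps)
            thus ?thesis using qx by simp
          qed
          hence "real m * x + y \<in> \<int>" by (simp only:) (intro Ints_add n Ints_of_int)
          hence "dZ (real m * x + y) = 0" by (simp add: dZ_zero_iff)
          hence "m \<in> {m. 1 \<le> m \<and> dZ (real m * x + y) < \<psi> m}"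
            using DD_pos[OF psi \<open>m \<ge> 1\<close>] \<open>m \<ge> 1\<close> by simp
          thus "\<exists>m'\<ge>M. m' \<in> {m. 1 \<le> m \<and> dZ (real m * x + y) < \<psi> m}" using \<open>m \<ge> M\<close> by blast
        qed
      qed
    qed
  qed
  have "T \<subseteq> (\<lambda>(n::nat, k::int). of_int k - real n * x) ` UNIV"
  proof
    fix y assume "y \<in> T"
    then obtain n where "real n * x + y \<in> \<int>" unfolding T_def by blast
    then obtain k where "real n * x + y = of_int k" by (elim Ints_cases)
    hence "y = (\<lambda>(n::nat, k::int). of_int k - real n * x) (n, k)" by simp
    thus "y \<in> (\<lambda>(n::nat, k::int). of_int k - real n * x) ` UNIV" by blast
  qed
  hence cT: "countable T" by (rule countable_subset) simp
  have "range (of_int :: int \<Rightarrow> real) \<subseteq> T" unfolding T_def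
  proof (clarify)
    fix k :: int show "\<exists>n::nat. real n * x + real_of_int k \<in> \<int>" by (intro exI[of _ 0]) simp
  qed
  moreover have "infinite (range (of_int :: int \<Rightarrow> real))"
  proof
    assume "finite (range (of_int :: int \<Rightarrow> real))"
    moreover have "inj (of_int :: int \<Rightarrow> real)" by (simp add: inj_on_def)
    ultimately have "finite (UNIV :: int set)" by (rule finite_imageD)
    thus False using infinite_UNIV_int by blast
  qed
  ultimately have iT: "infinite T" using finite_subset by blast
  obtain e :: "real \<Rightarrow> nat" where "bij_betw e T UNIV" using countableE_infinite[OF cT iT] by blast
  thus ?thesis unfolding \<open>Phi x = T\<close> eqpoll_def by blast
qed



primrec qseq :: "real \<Rightarrow> nat \<Rightarrow> nat" where
  "qseq x 0 = (SOME q. q \<ge> 1 \<and> real q * dZ (real q * x) < 1)"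
| "qseq x (Suc k) = (SOME q. q \<ge> 1 \<and> real q * dZ (real q * x)
      < min ((1/2) ^ Suc k) (dZ (real (qseq x k) * x) / 3))"

lemma WA_small:
  assumes "x \<in> WA" "e > 0" shows "\<exists>q\<ge>1. real q * dZ (real q * x) < e"
proof -
  let ?I = "INF n\<in>{1::nat..}. real n * dZ (real n * x)"
  have bdd: "bdd_below ((\<lambda>n. real n * dZ (real n * x)) ` {1::nat..})"
    by (auto intro!: bdd_belowI[of _ 0] simp: dZ_nonneg)
  have "\<not> ?I > 0" using assms(1) by (simp add: WA_def Bad_def)
  hence "?I < e" using assms(2) by linarith
  then obtain q where "q \<in> {1::nat..}" "real q * dZ (real q * x) < e"
    using cINF_less_iff[OF _ bdd] by auto
  thus ?thesis by auto
qed

lemma irr_pos: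
  assumes "x \<notin> \<rat>" "q \<ge> 1" shows "dZ (real q * x) > 0"
proof (rule ccontr)
  assume "\<not> ?thesis"
  hence "dZ (real q * x) = 0" using dZ_nonneg[of "real q * x"] by simp
  hence "real q * x \<in> \<int>" by (simp add: dZ_zero_iff)
  then obtain k where "real q * x = of_int k" by (elim Ints_cases)
  hence "x = of_int k / of_nat q" using assms(2) by (simp add: field_simps)
  hence "x \<in> \<rat>" by simp
  thus False using assms(1) by simp
qed

lemma le_qmult: "(q::nat) \<ge> 1 \<Longrightarrow> (t::real) \<ge> 0 \<Longrightarrow> t \<le> real q * t"
  using mult_right_mono[of 1 "real q" t] by simp

lemma qseq_props:
  assumes "x \<in> WA" "x \<notin> \<rat>"
  shows "qseq x k \<ge> 1 \<and> real (qseq x k) * dZ (real (qseq x k) * x) < (1/2) ^ k"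
    and "dZ (real (qseq x (Suc k)) * x) < dZ (real (qseq x k) * x) / 3"
proof -
  have ex0: "\<exists>q. q \<ge> 1 \<and> real q * dZ (real q * x) < 1" using WA_small[OF assms(1), of 1] by auto
  have exS: "\<exists>q. q \<ge> 1 \<and> real q * dZ (real q * x) < min ((1/2) ^ Suc j) (dZ (real (qseq x j) * x) / 3)"
    if "qseq x j \<ge> 1" for j
  proof -
    have "dZ (real (qseq x j) * x) > 0" by (rule irr_pos[OF assms(2) that])
    hence "min ((1/2) ^ Suc j) (dZ (real (qseq x j) * x) / 3) > 0" by simp
    thus ?thesis using WA_small[OF assms(1)] by blast
  qed
  have ge1: "qseq x k \<ge> 1" for k
  proof (induction k)
    case 0 from someI_ex[OF ex0] show ?case by simp
  next
    case (Suc k) from someI_ex[OF exS[OF Suc.IH]] show ?case by simp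
  qed
  show "qseq x k \<ge> 1 \<and> real (qseq x k) * dZ (real (qseq x k) * x) < (1/2) ^ k"
  proof (cases k)
    case 0 from someI_ex[OF ex0] show ?thesis using 0 by simp
  next
    case (Suc j) from someI_ex[OF exS[OF ge1[of j]]] show ?thesis using Suc by simp
  qed
  from someI_ex[OF exS[OF ge1[of k]]]
  have "real (qseq x (Suc k)) * dZ (real (qseq x (Suc k)) * x) < dZ (real (qseq x k) * x) / 3"
    by simp
  moreover have "dZ (real (qseq x (Suc k)) * x) \<le> real (qseq x (Suc k)) * dZ (real (qseq x (Suc k)) * x)"
    using ge1[of "Suc k"] dZ_nonneg by (intro le_qmult)
  ultimately show "dZ (real (qseq x (Suc k)) * x) < dZ (real (qseq x k) * x) / 3" by linarith
qed



lemma abs_suminf_le: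
  fixes a b :: "nat \<Rightarrow> real"
  assumes "summable b" "\<And>i. \<bar>a i\<bar> \<le> b i"
  shows "summable a" "\<bar>suminf a\<bar> \<le> suminf b"
proof -
  have sa: "summable (\<lambda>i. norm (a i))" by (rule summable_comparison_test'[OF assms(1)]) (use assms(2) in simp)
  thus "summable a" by (rule summable_norm_cancel)
  have "norm (suminf a) \<le> (\<Sum>i. norm (a i))" by (rule summable_norm[OF sa])
  also have "\<dots> \<le> suminf b" by (rule suminf_le) (use assms sa in auto)
  finally show "\<bar>suminf a\<bar> \<le> suminf b" by simp
qed

definition dd :: "real \<Rightarrow> nat \<Rightarrow> real" where "dd x k = dZ (real (qseq x k) * x)"
definition del :: "real \<Rightarrow> nat \<Rightarrow> real" where
  "del x k = real (qseq x k) * x - of_int (round (real (qseq x k) * x))"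
definition ff :: "real \<Rightarrow> (nat \<Rightarrow> bool) \<Rightarrow> nat \<Rightarrow> real" where
  "ff x e k = (if e k then del x k else 0)"
definition Yv :: "real \<Rightarrow> (nat \<Rightarrow> bool) \<Rightarrow> real" where "Yv x e = - suminf (ff x e)"
definition NN :: "real \<Rightarrow> (nat \<Rightarrow> bool) \<Rightarrow> nat \<Rightarrow> nat" where
  "NN x e j = (\<Sum>k<j. if e k then qseq x k else 0)"

context
  fixes x :: real
  assumes WA: "x \<in> WA" and irr: "x \<notin> \<rat>"
begin

lemma q_ge1: "qseq x k \<ge> 1" using qseq_props(1)[OF WA irr] by blast
lemma qdd: "real (qseq x k) * dd x k < (1/2) ^ k" using qseq_props(1)[OF WA irr] by (simp add: dd_def)
lemma dd_pos: "dd x k > 0" unfolding dd_def by (rule irr_pos[OF irr q_ge1])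
lemma dd_le: "dd x k \<le> (1/2) ^ k"
  using le_qmult[OF q_ge1, of "dd x k" k] dd_pos[of k] qdd[of k] by linarith
lemma dd_ratio: "dd x (j + i) \<le> (1/3) ^ i * dd x j"
proof (induction i)
  case 0 show ?case by simp
next
  case (Suc i)
  have "dd x (j + Suc i) \<le> dd x (j + i) / 3" using qseq_props(2)[OF WA irr, of "j + i"] by (simp add: dd_def)
  also have "\<dots> \<le> (1/3) ^ i * dd x j / 3" using Suc.IH by simp
  finally show ?case by simp
qed
lemma abs_del: "\<bar>del x k\<bar> = dd x k" by (simp add: del_def dd_def dZ_eq)
lemma abs_ff: "\<bar>ff x e k\<bar> \<le> dd x k" using dd_pos[of k] by (simp add: ff_def abs_del)

lemma summ_dd: "summable (dd x)"
  by (rule summable_comparison_test'[OF summable_geometric[of "1/2"]]) (use dd_le dd_pos in \<open>auto simp: less_imp_le\<close>)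

lemma tail_dd: "(\<Sum>i. dd x (i + j)) \<le> 3/2 * dd x j"
proof -
  have "(\<Sum>i. dd x (i + j)) \<le> (\<Sum>i. dd x j * (1/3) ^ i)"
  proof (rule suminf_le)
    show "dd x (i + j) \<le> dd x j * (1/3) ^ i" for i using dd_ratio[of j i] by (simp add: add.commute mult.commute)
    show "summable (\<lambda>i. dd x (i + j))" using summ_dd by simp
    show "summable (\<lambda>i. dd x j * (1/3) ^ i)" by (intro summable_mult summable_geometric) simp
  qed
  also have "\<dots> = 3/2 * dd x j" by (subst suminf_mult) (auto simp: suminf_geometric intro!: summable_geometric)
  finally show ?thesis .
qed

lemma summ_ff: "summable (ff x e)" by (rule abs_suminf_le(1)[OF summ_dd abs_ff])

lemma tail_ff: "\<bar>\<Sum>i. ff x e (i + j)\<bar> \<le> 3/2 * dd x j"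
proof -
  have "\<bar>\<Sum>i. ff x e (i + j)\<bar> \<le> (\<Sum>i. dd x (i + j))"
    by (rule abs_suminf_le(2)) (use abs_ff summ_dd in auto)
  thus ?thesis using tail_dd[of j] by linarith
qed

lemma near: "dZ (real (NN x e j) * x + Yv x e) \<le> 3/2 * dd x j"
proof -
  define R where "R = (\<Sum>k<j. if e k then round (real (qseq x k) * x) else 0)"
  have "real (NN x e j) * x = (\<Sum>k<j. if e k then real (qseq x k) * x else 0)"
    by (simp add: NN_def of_nat_sum sum_distrib_right) (intro sum.cong, auto)
  also have "\<dots> = (\<Sum>k<j. ff x e k + of_int (if e k then round (real (qseq x k) * x) else 0))"
    by (intro sum.cong) (auto simp: ff_def del_def)
  also have "\<dots> = (\<Sum>k<j. ff x e k) + of_int R" by (simp add: sum.distrib R_def of_int_sum)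
  finally have 1: "real (NN x e j) * x = (\<Sum>k<j. ff x e k) + of_int R" .
  have 2: "Yv x e = - (\<Sum>i. ff x e (i + j)) - (\<Sum>k<j. ff x e k)"
    unfolding Yv_def using suminf_split_initial_segment[OF summ_ff, of e j] by simp
  have "real (NN x e j) * x + Yv x e = - (\<Sum>i. ff x e (i + j)) + of_int R" using 1 2 by simp
  hence "dZ (real (NN x e j) * x + Yv x e) = dZ (- (\<Sum>i. ff x e (i + j)) + of_int R)" by (simp only:)
  also have "\<dots> = dZ (\<Sum>i. ff x e (i + j))" by (simp only: dZ_shift dZ_minus)
  also have "\<dots> \<le> \<bar>\<Sum>i. ff x e (i + j)\<bar>" by (rule dZ_abs)
  finally show ?thesis using tail_ff[of e j] by linarith
qed

lemma NN_Suc: "NN x e (Suc j) = NN x e j + (if e j then qseq x j else 0)" by (simp add: NN_def)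

lemma NN_mono: "j \<le> j' \<Longrightarrow> NN x e j \<le> NN x e j'"
  unfolding NN_def by (intro sum_mono2) auto

lemma NN_even: assumes "\<And>i. e (2 * i)" shows "NN x e (2 * i) \<ge> i"
proof (induction i)
  case 0 show ?case by simp
next
  case (Suc i)
  have "NN x e (2 * Suc i) = NN x e (Suc (2 * i)) + (if e (Suc (2*i)) then qseq x (Suc (2*i)) else 0)"
    by (simp add: NN_Suc[symmetric])
  also have "\<dots> \<ge> NN x e (Suc (2 * i))" by simp
  also have "NN x e (Suc (2 * i)) = NN x e (2 * i) + qseq x (2 * i)" using assms[of i] by (simp add: NN_Suc)
  finally show ?case using Suc.IH q_ge1[of "2*i"] by linarith
qed

end



context
  fixes x :: real
  assumes WA: "x \<in> WA" and irr: "x \<notin> \<rat>"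
begin

lemma Yv_mem:
  assumes ev: "\<And>i. e (2 * i)" shows "Yv x e \<in> Phi x"
  unfolding Phi_iff
proof
  fix \<psi> assume psi: "\<psi> \<in> DD"
  let ?Y = "Yv x e"
  let ?N = "NN x e"
  show "infinite {n::nat. n \<ge> 1 \<and> dZ (real n * x + ?Y) < \<psi> n}"
  proof
    assume fin: "finite {n::nat. n \<ge> 1 \<and> dZ (real n * x + ?Y) < \<psi> n}"
    obtain n0 where n0: "{n::nat. n \<ge> 1 \<and> dZ (real n * x + ?Y) < \<psi> n} \<subseteq> {..<n0}"
      using finite_nat_bounded[OF fin] by blast
    define n1 where "n1 = max n0 1"
    have n11: "n1 \<ge> 1" by (simp add: n1_def)
    have big: "\<psi> n \<le> dZ (real n * x + ?Y)" if "n \<ge> n1" for n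
      using n0 that by (force simp: n1_def not_less)
    define j0 where "j0 = 2 * n1"
    have Nj0: "?N j0 \<ge> n1" unfolding j0_def by (rule NN_even[OF WA irr]) (rule ev)
    have block: "(\<Sum>n\<in>{?N j..<?N (Suc j)}. \<psi> n) \<le> 3/2 * (1/2) ^ j" if "j \<ge> j0" for j
    proof -
      define c where "c = (if e j then qseq x j else 0)"
      have NS: "?N (Suc j) = ?N j + c" by (simp add: c_def NN_Suc[OF WA irr])
      have Nge: "?N j \<ge> n1" using Nj0 NN_mono[OF WA irr that, of e] by linarith
      have "(\<Sum>n\<in>{?N j..<?N (Suc j)}. \<psi> n) \<le> (\<Sum>n\<in>{?N j..<?N (Suc j)}. \<psi> (?N j))"
        by (intro sum_mono DD_mono[OF psi]) (use Nge n11 in auto)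
      also have "\<dots> = real c * \<psi> (?N j)" by (simp add: NS)
      also have "\<dots> \<le> real (qseq x j) * (3/2 * dd x j)"
      proof (rule mult_mono)
        show "real c \<le> real (qseq x j)" by (simp add: c_def)
        show "\<psi> (?N j) \<le> 3/2 * dd x j" using big[OF Nge] near[OF WA irr, of e j] by linarith
      qed (use dd_pos[OF WA irr, of j] DD_nonneg[OF psi, of "?N j"] Nge n11 in auto)
      also have "\<dots> = 3/2 * (real (qseq x j) * dd x j)" by simp
      also have "\<dots> \<le> 3/2 * (1/2) ^ j" using qdd[OF WA irr, of j] by (simp add: mult.commute)
      finally show ?thesis .
    qed
    have acc: "(\<Sum>n\<in>{?N j0..<?N (j0 + i)}. \<psi> n) \<le> (\<Sum>j\<in>{j0..<j0 + i}. 3/2 * (1/2) ^ j)" for i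
    proof (induction i)
      case 0 show ?case by simp
    next
      case (Suc i)
      have "(\<Sum>n\<in>{?N j0..<?N (j0 + Suc i)}. \<psi> n)
          = (\<Sum>n\<in>{?N j0..<?N (j0 + i)}. \<psi> n) + (\<Sum>n\<in>{?N (j0 + i)..<?N (Suc (j0 + i))}. \<psi> n)"
        by (simp add: sum.atLeastLessThan_concat NN_mono[OF WA irr])
      also have "\<dots> \<le> (\<Sum>j\<in>{j0..<j0 + i}. 3/2 * (1/2) ^ j) + 3/2 * (1/2) ^ (j0 + i)"
        using Suc.IH block[of "j0 + i"] by linarith
      also have "\<dots> = (\<Sum>j\<in>{j0..<j0 + Suc i}. 3/2 * (1/2) ^ j)" by simp
      finally show ?case .
    qed
    have geo: "(\<Sum>j\<in>{j0..<J}. 3/2 * (1/2::real) ^ j) \<le> 3" for J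
    proof -
      have "(\<Sum>j\<in>{j0..<J}. 3/2 * (1/2::real) ^ j) \<le> (\<Sum>j. 3/2 * (1/2::real) ^ j)"
        by (rule sum_le_suminf) (auto intro!: summable_mult summable_geometric)
      also have "\<dots> = 3" by (subst suminf_mult) (auto simp: suminf_geometric intro!: summable_geometric)
      finally show ?thesis .
    qed
    define B where "B = (\<Sum>n\<in>{1..<?N j0}. \<psi> n) + 3"
    have "(\<Sum>n=1..N. \<psi> n) \<le> B" for N
    proof -
      define J where "J = j0 + 2 * (N + 1)"
      have "?N J \<ge> ?N (2 * (N + 1))" by (rule NN_mono[OF WA irr]) (simp add: J_def)
      moreover have "?N (2 * (N + 1)) \<ge> N + 1" by (rule NN_even[OF WA irr]) (rule ev)
      ultimately have NJ: "?N J \<ge> N + 1" by linarith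
      have NJ0: "?N J \<ge> ?N j0" by (rule NN_mono[OF WA irr]) (simp add: J_def)
      have "(\<Sum>n=1..N. \<psi> n) \<le> (\<Sum>n\<in>{1..<?N J}. \<psi> n)"
        by (rule sum_mono2) (use NJ DD_nonneg[OF psi] in auto)
      also have "\<dots> = (\<Sum>n\<in>{1..<?N j0}. \<psi> n) + (\<Sum>n\<in>{?N j0..<?N J}. \<psi> n)"
        using Nj0 n11 NJ0 by (simp add: sum.atLeastLessThan_concat)
      also have "(\<Sum>n\<in>{?N j0..<?N J}. \<psi> n) \<le> 3"
        using acc[of "2 * (N + 1)"] geo[of "j0 + 2 * (N + 1)"] by (simp add: J_def)
      finally show ?thesis by (simp add: B_def)
    qed
    with DD_unbounded[OF psi, of B] show False by (meson not_less)
  qed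
qed

lemma Yv_inj:
  assumes "e \<noteq> e'" shows "Yv x e \<noteq> Yv x e'"
proof
  assume eq: "Yv x e = Yv x e'"
  from assms obtain k where "e k \<noteq> e' k" by blast
  define k0 where "k0 = (LEAST k. e k \<noteq> e' k)"
  have k0: "e k0 \<noteq> e' k0" unfolding k0_def by (rule LeastI) fact
  have before: "e k = e' k" if "k < k0" for k using not_less_Least[of k "\<lambda>k. e k \<noteq> e' k"] that unfolding k0_def by blast
  define g where "g k = ff x e k - ff x e' k" for k
  have sg: "summable g" unfolding g_def by (intro summable_diff summ_ff[OF WA irr])
  have "suminf g = suminf (ff x e) - suminf (ff x e')"
    unfolding g_def by (rule suminf_diff[symmetric]) (intro summ_ff[OF WA irr])+
  hence g0: "suminf g = 0" using eq by (simp add: Yv_def)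
  have absg: "\<bar>g k\<bar> \<le> dd x k" for k using dd_pos[OF WA irr, of k] by (auto simp: g_def ff_def abs_del[OF WA irr])
  have gk0: "\<bar>g k0\<bar> = dd x k0" using k0 by (auto simp: g_def ff_def abs_del[OF WA irr])
  have "(\<Sum>i<Suc k0. g i) = g k0" by (simp add: g_def ff_def before)
  hence split: "suminf g = (\<Sum>i. g (i + Suc k0)) + g k0" using suminf_split_initial_segment[OF sg, of "Suc k0"] by simp
  have "\<bar>\<Sum>i. g (i + Suc k0)\<bar> \<le> (\<Sum>i. dd x (i + Suc k0))"
  proof (rule abs_suminf_le(2))
    show "summable (\<lambda>i. dd x (i + Suc k0))" by (subst summable_iff_shift) (rule summ_dd[OF WA irr])
  qed (rule absg)
  also have "\<dots> \<le> 3/2 * dd x (Suc k0)" by (rule tail_dd[OF WA irr])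
  also have "\<dots> < 3/2 * (dd x k0 / 3)" using qseq_props(2)[OF WA irr, of k0] by (simp add: dd_def)
  finally have "\<bar>\<Sum>i. g (i + Suc k0)\<bar> < dd x k0 / 2" by simp
  with split g0 gk0 dd_pos[OF WA irr, of k0] show False by linarith
qed

end

lemma WA_case:
  assumes WA: "x \<in> WA" and irr: "x \<notin> \<rat>"
  shows "Phi x \<approx> (UNIV :: real set)"
proof (rule lepoll_antisym)
  show "Phi x \<lesssim> (UNIV :: real set)" by (rule subset_imp_lepoll) simp
  define E where "E r k = (even k \<or> from_nat_into (\<rat>::real set) (k div 2) < r)" for r :: real and k
  have cQ: "countable (\<rat>::real set)" by (simp add: countable_rat)
  have injE: "E r \<noteq> E s" if rs: "r < s" for r s
  proof -
    obtain q where q: "q \<in> \<rat>" "r < q" "q < s" using Rats_dense_in_real[OF rs] by blast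
    obtain m where m: "from_nat_into \<rat> m = q" using from_nat_into_surj[OF cQ q(1)] by blast
    have "\<not> E r (2 * m + 1)" "E s (2 * m + 1)" using m q by (auto simp: E_def)
    thus ?thesis by metis
  qed
  have "inj (\<lambda>r. Yv x (E r))"
  proof (rule injI)
    fix r s assume h: "Yv x (E r) = Yv x (E s)"
    show "r = s"
    proof (rule ccontr)
      assume "r \<noteq> s"
      hence "E r \<noteq> E s" using injE by (metis linorder_neq_iff)
      thus False using Yv_inj[OF WA irr] h by blast
    qed
  qed
  moreover have "Yv x (E r) \<in> Phi x" for r by (rule Yv_mem[OF WA irr]) (simp add: E_def)
  ultimately show "(UNIV :: real set) \<lesssim> Phi x" unfolding lepoll_def by blast
qed


theorem theorem19:
  fixes x :: real
  shows "(x \<in> \<rat> \<longrightarrow> Phi x \<approx> (UNIV :: nat set))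
       \<and> (x \<in> WA - \<rat> \<longrightarrow> Phi x \<approx> (UNIV :: real set))
       \<and> (x \<in> Bad \<longrightarrow> Phi x = {})"
  using Rat_case WA_case Bad_case by blast

end
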